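(* Fix $0<\alpha<1$ and $0<p_1<\frac12<p_2<1$, and suppose $(1-\alpha)(1-p_1)+\alpha(1-p_2)>\frac12$. For each $d\ge1$ let $\mu_d$ be the distribution on $Q_d$ given by \[ \mu_d(X)=(1-\alpha)p_1^{|X|}(1-p_1)^{d-|X|}+\alpha\,p_2^{|X|}(1-p_2)^{d-|X|}. \] (Then $w_i^0=(1-\alpha)(1-p_1)+\alpha(1-p_2)>\frac12$ for every $i$, so the majority point is $\mathbf 0$.) For every $d\ge1$, under $\mu_d$ at least one of the following holds: (a) $\mathbf 0$ is a best response to $\mathbf 0$, and hence $(\mathbf 0,\mathbf 0)$ is an equilibrium; (b) $\mathbf 1$ is a best response to $\mathbf 0$. Moreover, $P_1(\mathbf 1,\mathbf 0)\to\alpha$ as $d\to\infty$; in particular, if $\alpha>\frac12$ then for all sufficiently large $d$, $P_1(\mathbf 1,\mathbf 0)>\frac12$, so $(\mathbf 0,\mathbf 0)$ is not an equilibrium and $\mathbf 1$ is a best response to $\mathbf 0$, while if $\alpha<\frac12$ then for all sufficiently large $d$, $(\mathbf 0,\mathbf 0)$ is an equilibrium.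
   Context: $Q_d=\{0,1\}^d$ with the Hamming distance $d(X,Y)=|\{i: x_i\neq y_i\}|$; $|X|$ is the number of coordinates equal to $1$. For a probability distribution $\mu$ on $Q_d$ (extended additively to subsets), and $A,B\in Q_d$, let $V(A,B)=\{Z: d(Z,A)<d(Z,B)\}$, $T(A,B)=\{Z: d(Z,A)=d(Z,B)\}$, $P_1(A,B)=\mu(V(A,B))+\frac12\mu(T(A,B))$, $P_2(A,B)=\mu(V(B,A))+\frac12\mu(T(A,B))$. $(A,B)$ is an equilibrium if $P_1(A,B)\ge P_1(A',B)$ for all $A'$ and $P_2(A,B)\ge P_2(A,B')$ for all $B'$. $X$ is a best response to $B$ if $P_1(X,B)\ge P_1(X',B)$ for all $X'\in Q_d$. $w_i^0=\mu(\{Z: z_i=0\})$. $\mathbf 0=(0,\dots,0)$, $\mathbf 1=(1,\dots,1)$. *)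

theory Defs
  imports Complex_Main
begin

text \<open>Points of Q_d are encoded as subsets of {0..<d} (the set of coordinates equal to 1).\<close>

definition cube :: "nat \<Rightarrow> nat set set" where
  "cube d = Pow {0..<d}"

definition hdist :: "nat set \<Rightarrow> nat set \<Rightarrow> nat" where
  "hdist X Y = card ((X - Y) \<union> (Y - X))"

definition vor :: "nat \<Rightarrow> nat set \<Rightarrow> nat set \<Rightarrow> nat set set" where
  "vor d A B = {Z \<in> cube d. hdist Z A < hdist Z B}"

definition tie :: "nat \<Rightarrow> nat set \<Rightarrow> nat set \<Rightarrow> nat set set" where
  "tie d A B = {Z \<in> cube d. hdist Z A = hdist Z B}"

definition P1 :: "nat \<Rightarrow> (nat set \<Rightarrow> real) \<Rightarrow> nat set \<Rightarrow> nat set \<Rightarrow> real" where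
  "P1 d mu A B = (\<Sum>Z\<in>vor d A B. mu Z) + 1/2 * (\<Sum>Z\<in>tie d A B. mu Z)"

definition P2 :: "nat \<Rightarrow> (nat set \<Rightarrow> real) \<Rightarrow> nat set \<Rightarrow> nat set \<Rightarrow> real" where
  "P2 d mu A B = (\<Sum>Z\<in>vor d B A. mu Z) + 1/2 * (\<Sum>Z\<in>tie d A B. mu Z)"

definition equilibrium :: "nat \<Rightarrow> (nat set \<Rightarrow> real) \<Rightarrow> nat set \<Rightarrow> nat set \<Rightarrow> bool" where
  "equilibrium d mu A B \<longleftrightarrow> A \<in> cube d \<and> B \<in> cube d \<and>
     (\<forall>A'\<in>cube d. P1 d mu A B \<ge> P1 d mu A' B) \<and>
     (\<forall>B'\<in>cube d. P2 d mu A B \<ge> P2 d mu A B')"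

definition best_response :: "nat \<Rightarrow> (nat set \<Rightarrow> real) \<Rightarrow> nat set \<Rightarrow> nat set \<Rightarrow> bool" where
  "best_response d mu X B \<longleftrightarrow> X \<in> cube d \<and> (\<forall>X'\<in>cube d. P1 d mu X B \<ge> P1 d mu X' B)"

definition mix_mu :: "real \<Rightarrow> real \<Rightarrow> real \<Rightarrow> nat \<Rightarrow> nat set \<Rightarrow> real" where
  "mix_mu \<alpha> p1 p2 d X =
     (1 - \<alpha>) * p1 ^ card X * (1 - p1) ^ (d - card X) + \<alpha> * p2 ^ card X * (1 - p2) ^ (d - card X)"

end

theory Submission imports Defs begin

definition Bn :: "nat \<Rightarrow> nat \<Rightarrow> real \<Rightarrow> real" where
  "Bn k j p = real (k choose j) * p^j * (1-p)^(k-j)"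
definition Ex :: "nat \<Rightarrow> (nat \<Rightarrow> real) \<Rightarrow> real \<Rightarrow> real" where
  "Ex k u p = (\<Sum>j\<le>k. u j * Bn k j p)"

lemma Bn_big: "k < j \<Longrightarrow> Bn k j p = 0"
  by (simp add: Bn_def)

lemma Bn_Suc_0: "Bn (Suc k) 0 p = (1-p) * Bn k 0 p"
  by (simp add: Bn_def)

lemma Bn_Suc_Suc: "Bn (Suc k) (Suc j) p = p * Bn k j p + (1-p) * Bn k (Suc j) p"
proof (cases "j < k")
  case True
  then have e: "k - j = Suc (k - Suc j)" by simp
  show ?thesis unfolding Bn_def using True by (simp add: e algebra_simps)
next
  case False
  then have "k choose Suc j = 0" by simp
  then show ?thesis unfolding Bn_def using False by (simp add: algebra_simps)
qed

lemma Ex_Suc: "Ex (Suc k) u p = Ex k (\<lambda>j. (1-p) * u j + p * u (Suc j)) p"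
proof -
  have "Ex (Suc k) u p = u 0 * Bn (Suc k) 0 p + (\<Sum>j\<le>k. u (Suc j) * Bn (Suc k) (Suc j) p)"
    unfolding Ex_def by (simp only: sum.atMost_Suc_shift)
  also have "\<dots> = (1-p) * u 0 * Bn k 0 p + (\<Sum>j\<le>k. (1-p) * u (Suc j) * Bn k (Suc j) p)
       + (\<Sum>j\<le>k. p * u (Suc j) * Bn k j p)"
    by (simp add: Bn_Suc_0 Bn_Suc_Suc sum.distrib[symmetric] algebra_simps)
  also have "(1-p) * u 0 * Bn k 0 p + (\<Sum>j\<le>k. (1-p) * u (Suc j) * Bn k (Suc j) p)
      = (\<Sum>j\<le>Suc k. (1-p) * u j * Bn k j p)"
    by (simp only: sum.atMost_Suc_shift)
  also have "\<dots> = (\<Sum>j\<le>k. (1-p) * u j * Bn k j p)"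
    by (simp add: Bn_big)
  finally have eq: "Ex (Suc k) u p = (\<Sum>j\<le>k. (1-p) * u j * Bn k j p) + (\<Sum>j\<le>k. p * u (Suc j) * Bn k j p)"
    by simp
  have "Ex k (\<lambda>j. (1-p) * u j + p * u (Suc j)) p = (\<Sum>j\<le>k. (1-p) * u j * Bn k j p) + (\<Sum>j\<le>k. p * u (Suc j) * Bn k j p)"
    unfolding Ex_def by (simp add: distrib_right sum.distrib)
  then show ?thesis using eq by simp
qed

lemma Ex_sum_Bn: "(\<Sum>j\<le>k. Bn k j p) = 1"
  using binomial_ring[of p "1-p" k] by (simp add: Bn_def mult_ac)

lemma marg:
  assumes "finite D"
  shows "(\<Sum>Z\<in>Pow D. u (card (Z \<inter> X)) * p^card Z * (1-p)^(card D - card Z)) = Ex (card (D \<inter> X)) u p"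
  using assms
proof (induction D arbitrary: u rule: finite_induct)
  case empty
  then show ?case by (simp add: Ex_def Bn_def)
next
  case (insert a D)
  have inj: "inj_on (insert a) (Pow D)" using insert.hyps
    by (smt (verit, best) PowD inj_onI insert_ident subset_iff)
  have dis: "Pow D \<inter> insert a ` Pow D = {}" using insert.hyps by auto
  have fin: "finite (Pow D)" using insert.hyps by simp
  let ?n = "card D"
  have S: "(\<Sum>Z\<in>Pow (insert a D). u (card (Z \<inter> X)) * p^card Z * (1-p)^(card (insert a D) - card Z))
     = (\<Sum>Z\<in>Pow D. u (card (Z \<inter> X)) * p^card Z * (1-p)^(?n - card Z) * (1-p))
     + (\<Sum>Z\<in>Pow D. u (card (insert a Z \<inter> X)) * p^card Z * (1-p)^(?n - card Z) * p)"
  proof -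
    have "(\<Sum>Z\<in>Pow (insert a D). u (card (Z \<inter> X)) * p^card Z * (1-p)^(card (insert a D) - card Z))
      = (\<Sum>Z\<in>Pow D. u (card (Z \<inter> X)) * p^card Z * (1-p)^(card (insert a D) - card Z))
      + (\<Sum>Z\<in>insert a ` Pow D. u (card (Z \<inter> X)) * p^card Z * (1-p)^(card (insert a D) - card Z))"
      unfolding Pow_insert by (rule sum.union_disjoint) (use fin dis in auto)
    also have "(\<Sum>Z\<in>insert a ` Pow D. u (card (Z \<inter> X)) * p^card Z * (1-p)^(card (insert a D) - card Z))
       = (\<Sum>Z\<in>Pow D. u (card (insert a Z \<inter> X)) * p^card Z * (1-p)^(?n - card Z) * p)"
    proof (subst sum.reindex[OF inj], rule sum.cong)
      fix Z assume "Z \<in> Pow D"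
      then have "a \<notin> Z" "finite Z" using insert.hyps finite_subset by auto
      then show "((\<lambda>Z. u (card (Z \<inter> X)) * p ^ card Z * (1 - p) ^ (card (insert a D) - card Z)) \<circ> insert a) Z =
         u (card (insert a Z \<inter> X)) * p ^ card Z * (1 - p) ^ (card D - card Z) * p"
        using insert.hyps by simp
    qed simp
    also have "(\<Sum>Z\<in>Pow D. u (card (Z \<inter> X)) * p^card Z * (1-p)^(card (insert a D) - card Z))
       = (\<Sum>Z\<in>Pow D. u (card (Z \<inter> X)) * p^card Z * (1-p)^(?n - card Z) * (1-p))"
    proof (rule sum.cong)
      fix Z assume "Z \<in> Pow D"
      then have "card Z \<le> ?n" using insert.hyps card_mono by auto
      then have "card (insert a D) - card Z = Suc (?n - card Z)" using insert.hyps by simp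
      then show "u (card (Z \<inter> X)) * p ^ card Z * (1 - p) ^ (card (insert a D) - card Z) =
         u (card (Z \<inter> X)) * p ^ card Z * (1 - p) ^ (card D - card Z) * (1 - p)" by simp
    qed simp
    finally show ?thesis .
  qed
  show ?case
  proof (cases "a \<in> X")
    case True
    have c: "card (insert a Z \<inter> X) = Suc (card (Z \<inter> X))" if "Z \<in> Pow D" for Z
    proof -
      have "insert a Z \<inter> X = insert a (Z \<inter> X)" using True by auto
      moreover have "a \<notin> Z \<inter> X" "finite (Z \<inter> X)" using that insert.hyps finite_subset by auto
      ultimately show ?thesis by simp
    qed
    have "(\<Sum>Z\<in>Pow D. u (card (Z \<inter> X)) * p^card Z * (1-p)^(?n - card Z) * (1-p))
     + (\<Sum>Z\<in>Pow D. u (card (insert a Z \<inter> X)) * p^card Z * (1-p)^(?n - card Z) * p)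
     = (\<Sum>Z\<in>Pow D. ((1-p) * u (card (Z \<inter> X)) + p * u (Suc (card (Z \<inter> X)))) * p^card Z * (1-p)^(?n - card Z))"
      by (simp add: c sum.distrib[symmetric] algebra_simps)
    also have "\<dots> = Ex (card (D \<inter> X)) (\<lambda>j. (1-p) * u j + p * u (Suc j)) p"
      using insert.IH[of "\<lambda>j. (1-p) * u j + p * u (Suc j)"] by simp
    also have "\<dots> = Ex (card (insert a D \<inter> X)) u p"
    proof -
      have "insert a D \<inter> X = insert a (D \<inter> X)" using True by auto
      then have "card (insert a D \<inter> X) = Suc (card (D \<inter> X))" using insert.hyps by simp
      then show ?thesis by (simp add: Ex_Suc)
    qed
    finally show ?thesis using S by simp
  next
    case False
    have c: "insert a Z \<inter> X = Z \<inter> X" for Z using False by auto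
    have "(\<Sum>Z\<in>Pow D. u (card (Z \<inter> X)) * p^card Z * (1-p)^(?n - card Z) * (1-p))
     + (\<Sum>Z\<in>Pow D. u (card (insert a Z \<inter> X)) * p^card Z * (1-p)^(?n - card Z) * p)
     = (\<Sum>Z\<in>Pow D. u (card (Z \<inter> X)) * p^card Z * (1-p)^(?n - card Z))"
      by (simp add: c sum.distrib[symmetric] algebra_simps)
    also have "\<dots> = Ex (card (insert a D \<inter> X)) u p"
      using insert.IH[of u] False by simp
    finally show ?thesis using S by simp
  qed
qed

definition wt :: "nat \<Rightarrow> nat \<Rightarrow> real" where
  "wt k j = (if k < 2*j then 1 else if k = 2*j then 1/2 else 0)"
definition fk :: "nat \<Rightarrow> real \<Rightarrow> real" where
  "fk k p = Ex k (wt k) p"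

lemma fk0: "fk 0 p = 1/2"
  by (simp add: fk_def Ex_def wt_def Bn_def)

lemma fk1: "fk 1 p = p"
  by (simp add: fk_def Ex_def wt_def Bn_def)

lemma Ex_diff: "Ex k u p - Ex k v p = (\<Sum>j\<le>k. (u j - v j) * Bn k j p)"
  unfolding Ex_def by (simp add: sum_subtractf left_diff_distrib)

lemma two_point:
  assumes "Suc n \<le> k" "\<And>j. u j = (if j = n then A else 0) + (if j = Suc n then B else 0)"
  shows "(\<Sum>j\<le>k. u j * Bn k j p) = A * Bn k n p + B * Bn k (Suc n) p"
proof -
  have "(\<Sum>j\<le>k. u j * Bn k j p) = (\<Sum>j\<le>k. (if j = n then A * Bn k j p else 0)) + (\<Sum>j\<le>k. (if j = Suc n then B * Bn k j p else 0))"
    by (subst sum.distrib[symmetric], rule sum.cong) (auto simp: assms(2))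
  also have "\<dots> = A * Bn k n p + B * Bn k (Suc n) p"
    using assms(1) by (simp add: sum.delta)
  finally show ?thesis .
qed

lemma Bn_mid:
  "Bn (2*n+1) n p = real (2*n+1 choose n) * p^n * (1-p)^(Suc n)"
  "Bn (2*n+1) (Suc n) p = real (2*n+1 choose n) * p^(Suc n) * (1-p)^n"
proof -
  show "Bn (2*n+1) n p = real (2*n+1 choose n) * p^n * (1-p)^(Suc n)"
    by (simp add: Bn_def)
  have "(2*n+1 choose Suc n) = (2*n+1 choose n)"
    using binomial_symmetric[of "Suc n" "2*n+1"] by simp
  then show "Bn (2*n+1) (Suc n) p = real (2*n+1 choose n) * p^(Suc n) * (1-p)^n"
    by (simp add: Bn_def)
qed

lemma fk_even: "fk (2*n+2) p = fk (2*n+1) p"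
proof -
  have "fk (2*n+2) p = Ex (2*n+1) (\<lambda>j. (1-p) * wt (2*n+2) j + p * wt (2*n+2) (Suc j)) p"
    unfolding fk_def using Ex_Suc[of "2*n+1" "wt (2*n+2)" p] by simp
  then have "fk (2*n+2) p - fk (2*n+1) p = (\<Sum>j\<le>2*n+1. ((1-p) * wt (2*n+2) j + p * wt (2*n+2) (Suc j) - wt (2*n+1) j) * Bn (2*n+1) j p)"
    by (simp add: fk_def Ex_diff)
  also have "\<dots> = p/2 * Bn (2*n+1) n p + (-(1-p)/2) * Bn (2*n+1) (Suc n) p"
  proof (rule two_point)
    fix j
    show "(1-p) * wt (2*n+2) j + p * wt (2*n+2) (Suc j) - wt (2*n+1) j =
      (if j = n then p/2 else 0) + (if j = Suc n then -(1-p)/2 else 0)"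
      by (cases "j < n"; cases "j = n"; cases "j = Suc n"; auto simp: wt_def field_simps)
  qed simp
  also have "\<dots> = 0" unfolding Bn_mid by (simp add: field_simps)
  finally show ?thesis by simp
qed

lemma fk_odd: "fk (2*n+3) p - fk (2*n+1) p = real (2*n+1 choose n) * (p*(1-p))^(Suc n) * (2*p-1)"
proof -
  have "fk (2*n+3) p = Ex (2*n+1) (\<lambda>j. (1-p) * ((1-p) * wt (2*n+3) j + p * wt (2*n+3) (Suc j))
       + p * ((1-p) * wt (2*n+3) (Suc j) + p * wt (2*n+3) (Suc (Suc j)))) p"
    unfolding fk_def using Ex_Suc[of "Suc (2*n+1)" "wt (2*n+3)" p] Ex_Suc[of "2*n+1" _ p]
    by (simp add: numeral_3_eq_3)
  then have "fk (2*n+3) p - fk (2*n+1) p = (\<Sum>j\<le>2*n+1. ((1-p) * ((1-p) * wt (2*n+3) j + p * wt (2*n+3) (Suc j))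
       + p * ((1-p) * wt (2*n+3) (Suc j) + p * wt (2*n+3) (Suc (Suc j))) - wt (2*n+1) j) * Bn (2*n+1) j p)"
    by (simp add: fk_def Ex_diff)
  also have "\<dots> = p^2 * Bn (2*n+1) n p + (- ((1-p)^2)) * Bn (2*n+1) (Suc n) p"
  proof (rule two_point)
    fix j
    show "(1-p) * ((1-p) * wt (2*n+3) j + p * wt (2*n+3) (Suc j))
       + p * ((1-p) * wt (2*n+3) (Suc j) + p * wt (2*n+3) (Suc (Suc j))) - wt (2*n+1) j =
      (if j = n then p^2 else 0) + (if j = Suc n then - ((1-p)^2) else 0)"
      by (cases "j < n"; cases "j = n"; cases "j = Suc n"; auto simp: wt_def algebra_simps power2_eq_square)
  qed simp
  also have "\<dots> = real (2*n+1 choose n) * (p*(1-p))^(Suc n) * (2*p-1)"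
    unfolding Bn_mid power_mult_distrib by (simp add: algebra_simps power2_eq_square)
  finally show ?thesis .
qed

lemma pw_bound:
  fixes a b :: real
  assumes "0 \<le> a" "a \<le> b" "k \<le> 2*j" "j \<le> k"
  shows "a^j * b^(k-j) \<le> sqrt(a*b)^k"
proof -
  have b0: "0 \<le> b" using assms by simp
  define t where "t = 2*j - k"
  have e1: "2*j = k + t" and e2: "t + (2*k - 2*j) = k" using assms unfolding t_def by auto
  have e3: "2*k-2*j = 2*(k-j)" by simp
  have "(a^j * b^(k-j))^2 = a^(2*j) * b^(2*k-2*j)"
    unfolding e3 by (simp only: power_mult_distrib power_even_eq)
  also have "\<dots> = a^k * a^t * b^(2*k-2*j)" by (simp only: e1 power_add)
  also have "\<dots> \<le> a^k * b^t * b^(2*k-2*j)"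
  proof -
    have "a^t \<le> b^t" using assms by (intro power_mono) auto
    then have "a^k * a^t \<le> a^k * b^t" using assms by (intro mult_left_mono) auto
    then show ?thesis using b0 by (intro mult_right_mono) auto
  qed
  also have "\<dots> = a^k * b^k"
  proof -
    have "b^t * b^(2*k-2*j) = b^k" using e2 by (simp only: power_add[symmetric])
    then show ?thesis by (simp only: mult.assoc)
  qed
  also have "\<dots> = (sqrt(a*b)^k)^2"
  proof -
    have "(sqrt(a*b)^k)^2 = (sqrt(a*b)^2)^k" by (simp only: power_mult[symmetric] mult.commute)
    also have "sqrt(a*b)^2 = a*b" using assms b0 by simp
    finally show ?thesis by (simp only: power_mult_distrib)
  qed
  finally have sq: "(a^j * b^(k-j))^2 \<le> (sqrt(a*b)^k)^2" .
  have "0 \<le> a*b" using assms b0 by simp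
  then have "0 \<le> sqrt(a*b)^k" by simp
  then show ?thesis by (rule power2_le_imp_le[OF sq])
qed

lemma sum_choose_real: "(\<Sum>j\<le>k. real (k choose j) * c) = 2^k * c"
proof -
  have "(\<Sum>j\<le>k. real (k choose j) * c) = real (\<Sum>j\<le>k. k choose j) * c"
    by (simp add: sum_distrib_right)
  then show ?thesis by (simp add: choose_row_sum)
qed

lemma wt_range: "0 \<le> wt k j" "wt k j \<le> 1"
  by (auto simp: wt_def)

lemma fk_small:
  assumes "0 < p" "p < 1/2"
  shows "0 \<le> fk k p" "fk k p \<le> (2 * sqrt(p*(1-p)))^k"
proof -
  have Bn0: "0 \<le> Bn k j p" for j using assms by (simp add: Bn_def)
  show "0 \<le> fk k p" unfolding fk_def Ex_def using Bn0 wt_range by (intro sum_nonneg) simp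
  have "fk k p \<le> (\<Sum>j\<le>k. real (k choose j) * sqrt(p*(1-p))^k)"
    unfolding fk_def Ex_def
  proof (rule sum_mono)
    fix j assume j: "j \<in> {..k}"
    show "wt k j * Bn k j p \<le> real (k choose j) * sqrt (p * (1 - p)) ^ k"
    proof (cases "k \<le> 2*j")
      case True
      have "wt k j * Bn k j p \<le> Bn k j p" using wt_range[of k j] Bn0[of j] by (simp add: mult_left_le_one_le)
      also have "\<dots> = real (k choose j) * (p^j * (1-p)^(k-j))" by (simp add: Bn_def)
      also have "\<dots> \<le> real (k choose j) * sqrt (p * (1 - p)) ^ k"
        using pw_bound[of p "1-p" k j] True j assms by (intro mult_left_mono) auto
      finally show ?thesis .
    next
      case False
      have "0 \<le> sqrt(p*(1-p))" using assms by simp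
      then show ?thesis using False by (simp add: wt_def)
    qed
  qed
  also have "\<dots> = (2 * sqrt(p*(1-p)))^k" by (simp add: sum_choose_real power_mult_distrib)
  finally show "fk k p \<le> (2 * sqrt(p*(1-p)))^k" .
qed

lemma fk_large:
  assumes "1/2 < p" "p < 1"
  shows "0 \<le> 1 - fk k p" "1 - fk k p \<le> (2 * sqrt(p*(1-p)))^k"
proof -
  have Bn0: "0 \<le> Bn k j p" for j using assms by (simp add: Bn_def)
  have eq: "1 - fk k p = (\<Sum>j\<le>k. (1 - wt k j) * Bn k j p)"
    using Ex_sum_Bn[of k p] unfolding fk_def Ex_def by (simp add: left_diff_distrib sum_subtractf)
  show "0 \<le> 1 - fk k p" unfolding eq using Bn0 wt_range by (intro sum_nonneg) simp
  have "1 - fk k p \<le> (\<Sum>j\<le>k. real (k choose j) * sqrt(p*(1-p))^k)"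
    unfolding eq
  proof (rule sum_mono)
    fix j assume j: "j \<in> {..k}"
    show "(1 - wt k j) * Bn k j p \<le> real (k choose j) * sqrt (p * (1 - p)) ^ k"
    proof (cases "2*j \<le> k")
      case True
      have "(1 - wt k j) * Bn k j p \<le> Bn k j p" using wt_range[of k j] Bn0[of j] by (simp add: mult_left_le_one_le)
      also have "\<dots> = real (k choose j) * ((1-p)^(k-j) * p^(k-(k-j)))" using j by (simp add: Bn_def)
      also have "\<dots> \<le> real (k choose j) * sqrt ((1-p) * p) ^ k"
        using pw_bound[of "1-p" p k "k-j"] True j assms by (intro mult_left_mono) auto
      finally show ?thesis by (simp add: mult.commute)
    next
      case False
      have "0 \<le> sqrt(p*(1-p))" using assms by simp
      then show ?thesis using False by (simp add: wt_def)
    qed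
  qed
  also have "\<dots> = (2 * sqrt(p*(1-p)))^k" by (simp add: sum_choose_real power_mult_distrib)
  finally show "1 - fk k p \<le> (2 * sqrt(p*(1-p)))^k" .
qed

lemma r_lt1:
  assumes "0 < p" "p < 1" "p \<noteq> 1/2"
  shows "2 * sqrt(p*(1-p)) < 1"
proof -
  have "0 < (2*p - 1)^2" using assms by simp
  then have "4 * (p*(1-p)) < 1" by (simp add: power2_eq_square algebra_simps)
  then have "sqrt (4 * (p*(1-p))) < 1" by simp
  then show ?thesis by (simp add: real_sqrt_mult)
qed

lemma fk_lim0:
  assumes "0 < p" "p < 1/2"
  shows "(\<lambda>k. fk k p) \<longlonglongrightarrow> 0"
proof (rule tendsto_sandwich[of "\<lambda>_. 0" _ _ "\<lambda>k. (2 * sqrt(p*(1-p)))^k"])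
  show "\<forall>\<^sub>F n in sequentially. 0 \<le> fk n p" using fk_small assms by simp
  show "\<forall>\<^sub>F n in sequentially. fk n p \<le> (2 * sqrt(p*(1-p)))^n" using fk_small assms by simp
  have "2 * sqrt(p*(1-p)) < 1" using r_lt1 assms by simp
  moreover have "0 \<le> 2 * sqrt(p*(1-p))" using assms by simp
  ultimately show "(\<lambda>k. (2 * sqrt(p*(1-p)))^k) \<longlonglongrightarrow> 0" by (intro LIMSEQ_power_zero) simp
qed simp

lemma fk_lim1:
  assumes "1/2 < p" "p < 1"
  shows "(\<lambda>k. fk k p) \<longlonglongrightarrow> 1"
proof -
  have "(\<lambda>k. 1 - fk k p) \<longlonglongrightarrow> 0"
  proof (rule tendsto_sandwich[of "\<lambda>_. 0" _ _ "\<lambda>k. (2 * sqrt(p*(1-p)))^k"])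
    show "\<forall>\<^sub>F n in sequentially. 0 \<le> 1 - fk n p" using fk_large assms by simp
    show "\<forall>\<^sub>F n in sequentially. 1 - fk n p \<le> (2 * sqrt(p*(1-p)))^n" using fk_large assms by simp
    have "2 * sqrt(p*(1-p)) < 1" using r_lt1 assms by simp
    moreover have "0 \<le> 2 * sqrt(p*(1-p))" using assms by simp
    ultimately show "(\<lambda>k. (2 * sqrt(p*(1-p)))^k) \<longlonglongrightarrow> 0" by (intro LIMSEQ_power_zero) simp
  qed simp
  then have "(\<lambda>k. 1 - (1 - fk k p)) \<longlonglongrightarrow> 1 - 0" by (intro tendsto_diff) auto
  then show ?thesis by simp
qed

lemma hd_facts:
  assumes "finite Z" "finite X"
  shows "hdist Z {} = card Z"
    and "hdist Z X < hdist Z {} \<longleftrightarrow> card X < 2 * card (Z \<inter> X)"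
    and "hdist Z X = hdist Z {} \<longleftrightarrow> card X = 2 * card (Z \<inter> X)"
proof -
  show h0: "hdist Z {} = card Z" by (simp add: hdist_def)
  have "hdist Z X = card (Z - X) + card (X - Z)"
    unfolding hdist_def using assms by (intro card_Un_disjoint) auto
  moreover have "card (Z - X) = card Z - card (Z \<inter> X)" using assms by (simp add: card_Diff_subset_Int)
  moreover have "card (X - Z) = card X - card (X \<inter> Z)" using assms by (simp add: card_Diff_subset_Int)
  moreover have "card (Z \<inter> X) \<le> card Z" "card (X \<inter> Z) \<le> card X" using assms by (auto intro: card_mono)
  moreover have "X \<inter> Z = Z \<inter> X" by auto
  ultimately show "hdist Z X < hdist Z {} \<longleftrightarrow> card X < 2 * card (Z \<inter> X)"
    and "hdist Z X = hdist Z {} \<longleftrightarrow> card X = 2 * card (Z \<inter> X)" using h0 by auto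
qed

lemma P1_sum:
  assumes "X \<subseteq> {0..<d}"
  shows "P1 d mu X {} = (\<Sum>Z\<in>Pow {0..<d}. wt (card X) (card (Z \<inter> X)) * mu Z)"
proof -
  have fX: "finite X" using assms finite_subset by auto
  have fZ: "Z \<in> Pow {0..<d} \<Longrightarrow> finite Z" for Z using finite_subset by auto
  have V: "vor d X {} = {Z \<in> Pow {0..<d}. card X < 2 * card (Z \<inter> X)}"
    unfolding vor_def cube_def using hd_facts(2)[OF fZ fX] by auto
  have T: "tie d X {} = {Z \<in> Pow {0..<d}. card X = 2 * card (Z \<inter> X)}"
    unfolding tie_def cube_def using hd_facts(3)[OF fZ fX] by auto
  have "P1 d mu X {} = (\<Sum>Z\<in>Pow {0..<d}. (if card X < 2 * card (Z \<inter> X) then mu Z else 0))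
      + 1/2 * (\<Sum>Z\<in>Pow {0..<d}. (if card X = 2 * card (Z \<inter> X) then mu Z else 0))"
    unfolding P1_def V T by (simp only: sum.inter_filter[OF finite_Pow_iff[THEN iffD2, OF finite_atLeastLessThan]])
  also have "\<dots> = (\<Sum>Z\<in>Pow {0..<d}. wt (card X) (card (Z \<inter> X)) * mu Z)"
    by (simp add: sum_distrib_left sum.distrib[symmetric] wt_def) (intro sum.cong, auto)
  finally show ?thesis .
qed

lemma P1_formula:
  assumes "X \<subseteq> {0..<d}"
  shows "P1 d (mix_mu a p1 p2 d) X {} = (1-a) * fk (card X) p1 + a * fk (card X) p2"
proof -
  have D: "card {0..<d} = d" "{0..<d} \<inter> X = X" using assms by auto
  have m: "\<And>p. (\<Sum>Z\<in>Pow {0..<d}. wt (card X) (card (Z \<inter> X)) * p^card Z * (1-p)^(d - card Z)) = fk (card X) p"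
    using marg[of "{0..<d}" "wt (card X)" X] D unfolding fk_def by simp
  have "P1 d (mix_mu a p1 p2 d) X {} = (\<Sum>Z\<in>Pow {0..<d}. (1-a) * (wt (card X) (card (Z \<inter> X)) * p1^card Z * (1-p1)^(d - card Z))
     + a * (wt (card X) (card (Z \<inter> X)) * p2^card Z * (1-p2)^(d - card Z)))"
    unfolding P1_sum[OF assms] mix_mu_def by (intro sum.cong) (auto simp: algebra_simps)
  also have "\<dots> = (1-a) * fk (card X) p1 + a * fk (card X) p2"
    by (simp add: sum.distrib sum_distrib_left[symmetric] m)
  finally show ?thesis .
qed

context
  fixes a p1 p2 :: real
  assumes A: "0 < a" "a < 1" "0 < p1" "p1 < 1/2" "1/2 < p2" "p2 < 1"
    and W: "(1 - a) * (1 - p1) + a * (1 - p2) > 1/2"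
begin

definition "gg k = (1-a) * fk k p1 + a * fk k p2"
definition "hh n = gg (2*n+1)"
definition "ss n = a * (2*p2-1) * (p2*(1-p2))^(Suc n) - (1-a) * (1-2*p1) * (p1*(1-p1))^(Suc n)"

lemma hh_step: "hh (Suc n) - hh n = real (2*n+1 choose n) * ss n"
proof -
  have e: "2 * Suc n + 1 = 2*n+3" by simp
  have "hh (Suc n) - hh n = (1-a) * (fk (2*n+3) p1 - fk (2*n+1) p1) + a * (fk (2*n+3) p2 - fk (2*n+1) p2)"
    unfolding hh_def gg_def e by (simp add: algebra_simps)
  also have "\<dots> = (1-a) * (real (2*n+1 choose n) * (p1*(1-p1))^(Suc n) * (2*p1-1))
      + a * (real (2*n+1 choose n) * (p2*(1-p2))^(Suc n) * (2*p2-1))"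
    by (simp only: fk_odd)
  also have "\<dots> = real (2*n+1 choose n) * ss n"
    unfolding ss_def by (simp add: algebra_simps)
  finally show ?thesis .
qed

lemma ss_mono: "0 \<le> ss n \<Longrightarrow> 0 \<le> ss (Suc n)"
proof -
  assume s: "0 \<le> ss n"
  define x1 where "x1 = p1*(1-p1)"
  define x2 where "x2 = p2*(1-p2)"
  define AA where "AA = (1-a) * (1-2*p1)"
  define BB where "BB = a * (2*p2-1)"
  have x1p: "0 < x1" unfolding x1_def using A by simp
  have x2p: "0 < x2" unfolding x2_def using A by simp
  have Bp: "0 < BB" unfolding BB_def using A by simp
  have AB: "BB < AA" unfolding AA_def BB_def using W by (simp add: algebra_simps)
  have s': "AA * x1^Suc n \<le> BB * x2^Suc n" using s unfolding ss_def x1_def x2_def AA_def BB_def by simp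
  have "BB * x1^Suc n < AA * x1^Suc n" using AB x1p by simp
  then have "BB * x1^Suc n < BB * x2^Suc n" using s' by simp
  then have "x1^Suc n < x2^Suc n" using Bp by simp
  then have x12: "x1 < x2" using x2p by (meson less_imp_le power_less_imp_less_base)
  have "AA * x1^Suc (Suc n) = x1 * (AA * x1^Suc n)" by simp
  also have "\<dots> \<le> x2 * (AA * x1^Suc n)"
    using x12 AB Bp x1p by (intro mult_right_mono) auto
  also have "\<dots> \<le> x2 * (BB * x2^Suc n)" using s' x2p by (intro mult_left_mono) auto
  also have "\<dots> = BB * x2^Suc (Suc n)" by simp
  finally show ?thesis unfolding ss_def x1_def x2_def AA_def BB_def by simp
qed

lemma ss_neg: "ss n < 0 \<Longrightarrow> m \<le> n \<Longrightarrow> ss m < 0"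
proof (induction n arbitrary: m)
  case 0 then show ?case by simp
next
  case (Suc n)
  show ?case
  proof (cases "m = Suc n")
    case True then show ?thesis using Suc by simp
  next
    case False
    have "ss n < 0" using ss_mono[of n] Suc.prems by linarith
    then show ?thesis using Suc False by simp
  qed
qed

lemma hh_sign: "0 \<le> ss n \<Longrightarrow> hh n \<le> hh (Suc n)" "ss n < 0 \<Longrightarrow> hh (Suc n) \<le> hh n"
proof -
  have c: "0 < real (2*n+1 choose n)" by simp
  show "0 \<le> ss n \<Longrightarrow> hh n \<le> hh (Suc n)" using hh_step[of n] c
    by (metis diff_ge_0_iff_ge zero_le_mult_iff less_imp_le)
  show "ss n < 0 \<Longrightarrow> hh (Suc n) \<le> hh n" using hh_step[of n] c
    by (metis diff_le_0_iff_le mult_pos_neg less_imp_le)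
qed

lemma hh_dec: "(\<And>j. j < N \<Longrightarrow> ss j < 0) \<Longrightarrow> n \<le> N \<Longrightarrow> hh n \<le> hh 0"
proof (induction n)
  case 0 then show ?case by simp
next
  case (Suc n)
  then have "hh (Suc n) \<le> hh n" using hh_sign(2)[of n] by simp
  then show ?case using Suc by simp
qed

lemma hh_qc: "n \<le> N \<Longrightarrow> hh n \<le> max (hh 0) (hh N)"
proof (induction N arbitrary: n)
  case 0 then show ?case by simp
next
  case (Suc N)
  show ?case
  proof (cases "0 \<le> ss N")
    case True
    then have h: "hh N \<le> hh (Suc N)" by (rule hh_sign(1))
    show ?thesis
    proof (cases "n = Suc N")
      case True then show ?thesis by simp
    next
      case False
      then have "n \<le> N" using Suc.prems by simp
      then show ?thesis using Suc.IH[of n] h by linarith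
    qed
  next
    case False
    then have "\<And>j. j < Suc N \<Longrightarrow> ss j < 0" using ss_neg[of N] by simp
    then have "hh n \<le> hh 0" using hh_dec Suc.prems by blast
    then show ?thesis by simp
  qed
qed

lemma gg_hh: "1 \<le> k \<Longrightarrow> gg k = hh ((k-1) div 2)"
proof -
  assume k: "1 \<le> k"
  show ?thesis
  proof (cases "even k")
    case True
    define m where "m = k div 2 - 1"
    have m: "k = 2*m+2" unfolding m_def using True k by presburger
    then have "(k-1) div 2 = m" by simp
    then show ?thesis unfolding hh_def gg_def m using fk_even[of m p1] fk_even[of m p2] by simp
  next
    case False
    then obtain m where m: "k = 2*m+1" using oddE by blast
    then have "(k-1) div 2 = m" by simp
    then show ?thesis unfolding hh_def m by simp
  qed
qed

lemma gg0: "gg 0 = 1/2" by (simp add: gg_def fk0 field_simps)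

lemma hh0: "hh 0 < 1/2"
proof -
  have "hh 0 = (1-a) * p1 + a * p2" unfolding hh_def gg_def using fk1[of p1] fk1[of p2] by simp
  then show ?thesis using W by (simp add: algebra_simps)
qed

lemma gg_bound: "k \<le> d \<Longrightarrow> gg k \<le> max (1/2) (gg d)"
proof -
  assume kd: "k \<le> d"
  show ?thesis
  proof (cases "k = 0")
    case True then show ?thesis by (simp add: gg0)
  next
    case False
    then have "gg k = hh ((k-1) div 2)" "gg d = hh ((d-1) div 2)" using kd gg_hh by auto
    moreover have "(k-1) div 2 \<le> (d-1) div 2" using kd by (simp add: div_le_mono)
    ultimately show ?thesis using hh_qc[of "(k-1) div 2" "(d-1) div 2"] hh0 by (auto simp: max_def split: if_splits)
  qed
qed

lemma gg_lim: "gg \<longlonglongrightarrow> a"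
proof -
  have "(\<lambda>k. (1-a) * fk k p1 + a * fk k p2) \<longlonglongrightarrow> (1-a) * 0 + a * 1"
    using fk_lim0[of p1] fk_lim1[of p2] A by (intro tendsto_intros) auto
  then show ?thesis unfolding gg_def[abs_def] by simp
qed

end

lemma P2_P1: "P2 d mu A B = P1 d mu B A"
proof -
  have "tie d A B = tie d B A" unfolding tie_def by auto
  then show ?thesis unfolding P1_def P2_def by simp
qed

theorem mainTheorem12:
  fixes \<alpha> p1 p2 :: real
  assumes "0 < \<alpha>" "\<alpha> < 1" "0 < p1" "p1 < 1/2" "1/2 < p2" "p2 < 1"
    and "(1 - \<alpha>) * (1 - p1) + \<alpha> * (1 - p2) > 1/2"
  shows "(\<forall>d\<ge>1.
            (best_response d (mix_mu \<alpha> p1 p2 d) {} {} \<and> equilibrium d (mix_mu \<alpha> p1 p2 d) {} {})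
            \<or> best_response d (mix_mu \<alpha> p1 p2 d) {0..<d} {})
       \<and> ((\<lambda>d. P1 d (mix_mu \<alpha> p1 p2 d) {0..<d} {}) \<longlonglongrightarrow> \<alpha>)
       \<and> (\<alpha> > 1/2 \<longrightarrow> (\<forall>\<^sub>F d in sequentially.
              P1 d (mix_mu \<alpha> p1 p2 d) {0..<d} {} > 1/2
              \<and> \<not> equilibrium d (mix_mu \<alpha> p1 p2 d) {} {}
              \<and> best_response d (mix_mu \<alpha> p1 p2 d) {0..<d} {}))
       \<and> (\<alpha> < 1/2 \<longrightarrow> (\<forall>\<^sub>F d in sequentially. equilibrium d (mix_mu \<alpha> p1 p2 d) {} {}))"
proof -
  let ?g = "gg \<alpha> p1 p2"
  have PF: "P1 d (mix_mu \<alpha> p1 p2 d) X {} = ?g (card X)" if "X \<subseteq> {0..<d}" for d X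
    using P1_formula[OF that] by (simp add: gg_def[OF assms])
  have bnd: "k \<le> d \<Longrightarrow> ?g k \<le> max (1/2) (?g d)" for k d
    using gg_bound[OF assms] by blast
  have g0: "?g 0 = 1/2" using gg0[OF assms] .
  have P00: "P1 d (mix_mu \<alpha> p1 p2 d) {} {} = 1/2" for d using PF[of "{}" d] g0 by simp
  have P10: "P1 d (mix_mu \<alpha> p1 p2 d) {0..<d} {} = ?g d" for d using PF[of "{0..<d}" d] by simp
  have cardc: "X \<in> cube d \<Longrightarrow> X \<subseteq> {0..<d} \<and> card X \<le> d" for X d
    unfolding cube_def using card_mono[of "{0..<d}" X] by auto
  have BR0: "best_response d (mix_mu \<alpha> p1 p2 d) {} {}" if "?g d \<le> 1/2" for d
    unfolding best_response_def
  proof (intro conjI ballI)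
    show "{} \<in> cube d" by (simp add: cube_def)
    fix X assume "X \<in> cube d"
    then show "P1 d (mix_mu \<alpha> p1 p2 d) X {} \<le> P1 d (mix_mu \<alpha> p1 p2 d) {} {}"
      using cardc[of X d] PF[of X d] P00[of d] bnd[of "card X" d] that by auto
  qed
  have BR1: "best_response d (mix_mu \<alpha> p1 p2 d) {0..<d} {}" if "1/2 \<le> ?g d" for d
    unfolding best_response_def
  proof (intro conjI ballI)
    show "{0..<d} \<in> cube d" by (simp add: cube_def)
    fix X assume "X \<in> cube d"
    then show "P1 d (mix_mu \<alpha> p1 p2 d) X {} \<le> P1 d (mix_mu \<alpha> p1 p2 d) {0..<d} {}"
      using cardc[of X d] PF[of X d] P10[of d] bnd[of "card X" d] that by auto
  qed
  have EQ: "equilibrium d (mix_mu \<alpha> p1 p2 d) {} {}" if "best_response d (mix_mu \<alpha> p1 p2 d) {} {}" for d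
    using that unfolding equilibrium_def best_response_def by (simp add: P2_P1)
  have NEQ: "\<not> equilibrium d (mix_mu \<alpha> p1 p2 d) {} {}" if "1/2 < ?g d" for d
  proof
    assume "equilibrium d (mix_mu \<alpha> p1 p2 d) {} {}"
    then have "P1 d (mix_mu \<alpha> p1 p2 d) {0..<d} {} \<le> P1 d (mix_mu \<alpha> p1 p2 d) {} {}"
      unfolding equilibrium_def cube_def by auto
    then show False using that P00 P10 by simp
  qed
  have lim: "?g \<longlonglongrightarrow> \<alpha>" using gg_lim[OF assms] .
  show ?thesis
  proof (intro conjI impI allI)
    fix d :: nat
    show "(best_response d (mix_mu \<alpha> p1 p2 d) {} {} \<and> equilibrium d (mix_mu \<alpha> p1 p2 d) {} {})
            \<or> best_response d (mix_mu \<alpha> p1 p2 d) {0..<d} {}"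
      using BR0[of d] BR1[of d] EQ[of d] by (cases "?g d \<le> 1/2") auto
  next
    show "(\<lambda>d. P1 d (mix_mu \<alpha> p1 p2 d) {0..<d} {}) \<longlonglongrightarrow> \<alpha>" using lim by (simp add: P10)
  next
    assume "1/2 < \<alpha>"
    then have ev: "\<forall>\<^sub>F d in sequentially. 1/2 < ?g d" using order_tendstoD(1)[OF lim] by blast
    show "\<forall>\<^sub>F d in sequentially. 1/2 < P1 d (mix_mu \<alpha> p1 p2 d) {0..<d} {}
              \<and> \<not> equilibrium d (mix_mu \<alpha> p1 p2 d) {} {}
              \<and> best_response d (mix_mu \<alpha> p1 p2 d) {0..<d} {}"
      using ev by eventually_elim (use P10 NEQ BR1 in auto)
  next
    assume "\<alpha> < 1/2"
    then have ev: "\<forall>\<^sub>F d in sequentially. ?g d < 1/2" using order_tendstoD(2)[OF lim] by blast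
    show "\<forall>\<^sub>F d in sequentially. equilibrium d (mix_mu \<alpha> p1 p2 d) {} {}"
      using ev by eventually_elim (use BR0 EQ in auto)
  qed
qed

end
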